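(* Let $n$ and $k$ be positive integers with $k\le n$, and let $m$ be a nonnegative integer. Consider an airplane with $n$ seats numbered $1,\dots,n$ and $n$ passengers numbered $1,\dots,n$, passenger $i$ being assigned seat $i$. Passengers board one at a time in the order $1,2,\dots,n$. Passengers $1,\dots,k$ are absent-minded: when it is such a passenger's turn, he chooses a seat uniformly at random among the currently unoccupied seats. Each passenger $i>k$ sits in seat $i$ if it is unoccupied, and otherwise chooses a seat uniformly at random among the currently unoccupied seats. Call a passenger misseated if he does not end up in his assigned seat. Then the probability $P_{n,k}(m)$ that exactly $m$ passengers are misseated is \[ P_{n,k}(m)=\frac{(-1)^m(n-k)!}{n!}\binom{k}{m}+\frac{1}{n!}\sum_{s=1}^{k}\left[{n-k+1 \atop m-s+1}\right]\binom{k}{s}\, s!\sum_{\ell=1}^{s}\frac{(-1)^{s-\ell}\,\ell^{m-s}}{(s-\ell)!}. \]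
   Context: Here $\left[{i \atop j}\right]$ denotes the unsigned Stirling number of the first kind (the number of permutations of $i$ elements with exactly $j$ disjoint cycles), with the conventions $\left[{p \atop 0}\right]=0$ and $\left[{p \atop -q}\right]=0$ for positive integers $p,q$. The binomial coefficient $\binom{k}{m}$ is interpreted as $0$ when $m>k$. *)

theory Defs
  imports "HOL-Probability.Probability" "HOL-Combinatorics.Stirling"
begin

text \<open>Boarding process. board n k r S: distribution of the number of misseated
passengers among the last r passengers (passengers n-r+1, ..., n), given that
the set S of seats is already occupied.\<close>
fun board :: "nat \<Rightarrow> nat \<Rightarrow> nat \<Rightarrow> nat set \<Rightarrow> nat pmf" where
  "board n k 0 S = return_pmf 0"
| "board n k (Suc r) S =
     (let i = n - r in
      if i \<le> k \<or> i \<in> S then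
        pmf_of_set ({1..n} - S) \<bind>
          (\<lambda>j. map_pmf (\<lambda>c. c + (if j = i then 0 else 1)) (board n k r (insert j S)))
      else board n k r (insert i S))"

definition P :: "nat \<Rightarrow> nat \<Rightarrow> nat \<Rightarrow> real" where
  "P n k m = pmf (board n k n {}) m"

definition stirl :: "nat \<Rightarrow> int \<Rightarrow> nat" where
  "stirl p j = (if j < 0 then 0 else stirling p (nat j))"

end

theory Submission
  imports Defs "HOL-Computational_Algebra.Polynomial"
begin


lemma telescope:
  fixes A B :: "nat \<Rightarrow> real"
  shows "(\<Prod>c\<in>{b<..<m}. B c) - (\<Prod>c\<in>{b<..<m}. A c) =
    (\<Sum>c0\<in>{b<..<m}. (B c0 - A c0) * (\<Prod>c\<in>{b<..<c0}. A c) * (\<Prod>c\<in>{c0<..<m}. B c))"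
proof (induction m)
  case 0 then show ?case by simp
next
  case (Suc m)
  show ?case
  proof (cases "m \<le> b")
    case True
    then have "{b<..<Suc m} = {}" by auto
    then show ?thesis by simp
  next
    case False
    then have e: "{b<..<Suc m} = insert m {b<..<m}" by auto
    have e2: "\<And>c0. c0 \<in> {b<..<m} \<Longrightarrow> {c0<..<Suc m} = insert m {c0<..<m}" by auto
    have "(\<Sum>c0\<in>{b<..<Suc m}. (B c0 - A c0) * (\<Prod>c\<in>{b<..<c0}. A c) * (\<Prod>c\<in>{c0<..<Suc m}. B c))
      = (B m - A m) * (\<Prod>c\<in>{b<..<m}. A c) + (\<Sum>c0\<in>{b<..<m}. (B c0 - A c0) * (\<Prod>c\<in>{b<..<c0}. A c) * (B m * (\<Prod>c\<in>{c0<..<m}. B c)))"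
    proof -
      have z: "{m<..<Suc m} = {}" by auto
      have "(\<Sum>c0\<in>{b<..<m}. (B c0 - A c0) * (\<Prod>c\<in>{b<..<c0}. A c) * (\<Prod>c\<in>{c0<..<Suc m}. B c))
         = (\<Sum>c0\<in>{b<..<m}. (B c0 - A c0) * (\<Prod>c\<in>{b<..<c0}. A c) * (B m * (\<Prod>c\<in>{c0<..<m}. B c)))"
        by (intro sum.cong refl) (simp add: e2)
      then show ?thesis unfolding e by (simp add: z)
    qed
    also have "\<dots> = (B m - A m) * (\<Prod>c\<in>{b<..<m}. A c) + B m * (\<Sum>c0\<in>{b<..<m}. (B c0 - A c0) * (\<Prod>c\<in>{b<..<c0}. A c) * (\<Prod>c\<in>{c0<..<m}. B c))"
      by (simp add: sum_distrib_left algebra_simps)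
    also have "\<dots> = (B m - A m) * (\<Prod>c\<in>{b<..<m}. A c) + B m * ((\<Prod>c\<in>{b<..<m}. B c) - (\<Prod>c\<in>{b<..<m}. A c))"
      using Suc by simp
    also have "\<dots> = (\<Prod>c\<in>{b<..<Suc m}. B c) - (\<Prod>c\<in>{b<..<Suc m}. A c)"
      unfolding e by (simp add: algebra_simps)
    finally show ?thesis by simp
  qed
qed

definition Pf :: "nat \<Rightarrow> nat \<Rightarrow> nat set \<Rightarrow> nat \<Rightarrow> real \<Rightarrow> real" where
  "Pf n b S l x = (\<Prod>c\<in>{b<..<Suc n}. (if c \<in> S then x else real (n - c + 1) + real (card (S \<inter> {b<..<c}) + l) * x))"

lemma Pf_insert_low:
  assumes "y \<le> b"
  shows "Pf n b (insert y S) l x = Pf n b S l x"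
proof -
  have "\<And>c. insert y S \<inter> {b<..<c} = S \<inter> {b<..<c}" using assms by auto
  moreover have "\<And>c. c \<in> {b<..<Suc n} \<Longrightarrow> (c \<in> insert y S) = (c \<in> S)" using assms by auto
  ultimately show ?thesis unfolding Pf_def by (intro prod.cong) auto
qed

lemma Pf_telescope:
  "(\<Sum>c0\<in>{b<..<Suc n} - S. Pf n b (insert c0 S) l x) = Pf n b S (Suc l) x - Pf n b S l x"
proof -
  define A where "A c = (if c \<in> S then x else real (n - c + 1) + real (card (S \<inter> {b<..<c}) + l) * x)" for c
  define B where "B c = (if c \<in> S then x else real (n - c + 1) + real (card (S \<inter> {b<..<c}) + Suc l) * x)" for c
  have key: "Pf n b (insert c0 S) l x = (B c0 - A c0) * (\<Prod>c\<in>{b<..<c0}. A c) * (\<Prod>c\<in>{c0<..<Suc n}. B c)"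
    if c0: "c0 \<in> {b<..<Suc n} - S" for c0
  proof -
    let ?F = "\<lambda>c. (if c \<in> insert c0 S then x else real (n - c + 1) + real (card (insert c0 S \<inter> {b<..<c}) + l) * x)"
    have split: "{b<..<Suc n} = {b<..<c0} \<union> {c0} \<union> {c0<..<Suc n}" using c0 by auto
    have "Pf n b (insert c0 S) l x = (\<Prod>c\<in>{b<..<c0}. ?F c) * ?F c0 * (\<Prod>c\<in>{c0<..<Suc n}. ?F c)"
      unfolding Pf_def split
      by (subst prod.union_disjoint; auto)+
    also have "(\<Prod>c\<in>{b<..<c0}. ?F c) = (\<Prod>c\<in>{b<..<c0}. A c)"
    proof (intro prod.cong refl)
      fix c assume "c \<in> {b<..<c0}"
      then have "insert c0 S \<inter> {b<..<c} = S \<inter> {b<..<c}" by auto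
      then show "?F c = A c" using \<open>c \<in> {b<..<c0}\<close> by (auto simp: A_def)
    qed
    also have "(\<Prod>c\<in>{c0<..<Suc n}. ?F c) = (\<Prod>c\<in>{c0<..<Suc n}. B c)"
    proof (intro prod.cong refl)
      fix c assume c: "c \<in> {c0<..<Suc n}"
      then have "insert c0 S \<inter> {b<..<c} = insert c0 (S \<inter> {b<..<c})" using c0 by auto
      then have "card (insert c0 S \<inter> {b<..<c}) = Suc (card (S \<inter> {b<..<c}))" using c0 by simp
      then show "?F c = B c" using c by (auto simp: B_def)
    qed
    also have "?F c0 = B c0 - A c0" using c0 by (simp add: A_def B_def algebra_simps)
    finally show ?thesis by (simp add: mult.commute mult.left_commute)
  qed
  have "(\<Sum>c0\<in>{b<..<Suc n} - S. Pf n b (insert c0 S) l x) =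
        (\<Sum>c0\<in>{b<..<Suc n} - S. (B c0 - A c0) * (\<Prod>c\<in>{b<..<c0}. A c) * (\<Prod>c\<in>{c0<..<Suc n}. B c))"
    using key by (intro sum.cong) auto
  also have "\<dots> = (\<Sum>c0\<in>{b<..<Suc n}. (B c0 - A c0) * (\<Prod>c\<in>{b<..<c0}. A c) * (\<Prod>c\<in>{c0<..<Suc n}. B c))"
    by (intro sum.mono_neutral_left) (auto simp: A_def B_def)
  also have "\<dots> = (\<Prod>c\<in>{b<..<Suc n}. B c) - (\<Prod>c\<in>{b<..<Suc n}. A c)"
    by (rule telescope[symmetric])
  also have "\<dots> = Pf n b S (Suc l) x - Pf n b S l x"
    unfolding Pf_def A_def B_def by simp
  finally show ?thesis .
qed

lemma Pf_shift:
  assumes "i < n"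
  shows "Pf n i S l x = (if Suc i \<in> S then x else real (n - i) + real l * x) *
     Pf n (Suc i) S (l + (if Suc i \<in> S then 1 else 0)) x"
proof -
  have e: "{i<..<Suc n} = insert (Suc i) {Suc i<..<Suc n}" using assms by auto
  have c: "card (S \<inter> {i<..<c}) = card (S \<inter> {Suc i<..<c}) + (if Suc i \<in> S then 1 else 0)"
    if "c \<in> {Suc i<..<Suc n}" for c
  proof -
    have "S \<inter> {i<..<c} = (if Suc i \<in> S then insert (Suc i) (S \<inter> {Suc i<..<c}) else S \<inter> {Suc i<..<c})"
      using that by (auto; metis Suc_lessI)
    then show ?thesis by auto
  qed
  have s: "S \<inter> {i<..<Suc i} = {}" by auto
  have p: "(\<Prod>c\<in>{Suc i<..<Suc n}. (if c \<in> S then x else real (n - c + 1) + real (card (S \<inter> {i<..<c}) + l) * x))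
    = (\<Prod>c\<in>{Suc i<..<Suc n}. (if c \<in> S then x else real (n - c + 1) + real (card (S \<inter> {Suc i<..<c}) + (l + (if Suc i \<in> S then 1 else 0))) * x))"
    by (intro prod.cong refl) (simp add: c)
  have nn: "1 + real (n - Suc i) = real (n - i)" using assms by simp
  show ?thesis unfolding Pf_def e
    by (simp add: s p nn)
qed



fun Psi :: "real \<Rightarrow> nat \<Rightarrow> nat \<Rightarrow> nat \<Rightarrow> (nat \<Rightarrow> real) \<Rightarrow> real" where
  "Psi x 0 d a Q = fact (a + d) * x ^ d * Q d"
| "Psi x (Suc f) d a Q = (1 - x) * Psi x f d a Q + Psi x f (Suc d) a Q"

definition DQ :: "(nat \<Rightarrow> real) \<Rightarrow> nat \<Rightarrow> real" where
  "DQ Q l = Q (Suc l) - Q l"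

lemma Psi_T:
  "Psi x f (Suc e) a Q = x * real f * Psi x (f - 1) (Suc e) a Q
     + x * real (Suc e + a) * Psi x f e a Q + x * Psi x f e (Suc a) (DQ Q)"
proof (induction f arbitrary: e)
  case 0
  have "fact (a + Suc e) = (real (Suc e + a)) * (fact (a + e) :: real)"
    by (simp add: algebra_simps)
  moreover have "fact (Suc a + e) = (real (Suc e + a)) * (fact (a + e) :: real)"
    by (simp add: algebra_simps)
  ultimately show ?case by (simp add: DQ_def algebra_simps)
next
  case (Suc f)
  have aux: "real f * Psi x f (Suc e) a Q = real f * ((1-x) * Psi x (f-1) (Suc e) a Q + Psi x (f-1) (Suc (Suc e)) a Q)"
    by (cases f) auto
  note I1 = Suc.IH[of e]
  note I2 = Suc.IH[of "Suc e"]
  show ?case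
    apply (simp only: Psi.simps diff_Suc_1)
    apply (subst I1)
    apply (subst I2)
    using arg_cong[OF aux, of "(*) x"] by (simp add: algebra_simps)
qed

lemma Psi_F:
  "Psi x (Suc g) d a Q = (1 + x * real (d + a)) * Psi x g d a Q
     + x * real g * Psi x (g - 1) (Suc d) a Q + x * Psi x g d (Suc a) (DQ Q)"
  using Psi_T[of x g d a Q] by (simp add: algebra_simps)

lemma Psi_sum:
  assumes "finite Y"
  shows "Psi x f d a (\<lambda>l. \<Sum>y\<in>Y. Q y l) = (\<Sum>y\<in>Y. Psi x f d a (Q y))"
  by (induction f arbitrary: d) (simp_all add: sum_distrib_left sum.distrib)

lemma Psi_closed:
  "Psi x f d a Q = (\<Sum>t\<le>f. real (f choose t) * fact (a + d + t) * x ^ (d + t) * (1 - x) ^ (f - t) * Q (d + t))"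
proof (induction f arbitrary: d)
  case 0 then show ?case by simp
next
  case (Suc f)
  have "Psi x (Suc f) d a Q = (1 - x) * (\<Sum>t\<le>f. real (f choose t) * fact (a + d + t) * x ^ (d + t) * (1 - x) ^ (f - t) * Q (d + t))
     + (\<Sum>t\<le>f. real (f choose t) * fact (a + Suc d + t) * x ^ (Suc d + t) * (1 - x) ^ (f - t) * Q (Suc d + t))"
    using Suc by simp
  also have "(1 - x) * (\<Sum>t\<le>f. real (f choose t) * fact (a + d + t) * x ^ (d + t) * (1 - x) ^ (f - t) * Q (d + t))
     = (\<Sum>t\<le>Suc f. real (f choose t) * fact (a + d + t) * x ^ (d + t) * (1 - x) ^ (Suc f - t) * Q (d + t))"
    by (simp add: sum_distrib_left Suc_diff_le algebra_simps binomial_eq_0)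
  also have "(\<Sum>t\<le>f. real (f choose t) * fact (a + Suc d + t) * x ^ (Suc d + t) * (1 - x) ^ (f - t) * Q (Suc d + t))
     = (\<Sum>t\<le>Suc f. (if t = 0 then 0 else real (f choose (t - 1))) * fact (a + d + t) * x ^ (d + t) * (1 - x) ^ (Suc f - t) * Q (d + t))"
    by (subst sum.atMost_Suc_shift) simp
  also have "(\<Sum>t\<le>Suc f. real (f choose t) * fact (a + d + t) * x ^ (d + t) * (1 - x) ^ (Suc f - t) * Q (d + t))
      + (\<Sum>t\<le>Suc f. (if t = 0 then 0 else real (f choose (t - 1))) * fact (a + d + t) * x ^ (d + t) * (1 - x) ^ (Suc f - t) * Q (d + t))
      = (\<Sum>t\<le>Suc f. real (Suc f choose t) * fact (a + d + t) * x ^ (d + t) * (1 - x) ^ (Suc f - t) * Q (d + t))"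
    unfolding sum.distrib[symmetric]
  proof (intro sum.cong refl)
    fix t assume "t \<in> {..Suc f}"
    show "real (f choose t) * fact (a + d + t) * x ^ (d + t) * (1 - x) ^ (Suc f - t) * Q (d + t) +
          (if t = 0 then 0 else real (f choose (t - 1))) * fact (a + d + t) * x ^ (d + t) * (1 - x) ^ (Suc f - t) * Q (d + t) =
          real (Suc f choose t) * fact (a + d + t) * x ^ (d + t) * (1 - x) ^ (Suc f - t) * Q (d + t)"
      by (cases t) (simp_all add: algebra_simps)
  qed
  finally show ?case .
qed



lemma board_support: "set_pmf (board n k r S) \<subseteq> {..r}"
proof (induction r arbitrary: S)
  case 0 then show ?case by simp
next
  case (Suc r)
  have "set_pmf (map_pmf (\<lambda>c. c + (if j = i then 0 else 1)) (board n k r T)) \<subseteq> {..Suc r}" for j i :: nat and T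
    using Suc[of T] by force
  note h = this
  show ?case
  proof (cases "n - r \<le> k \<or> n - r \<in> S")
    case True
    then show ?thesis
      apply (simp only: board.simps Let_def if_True set_bind_pmf)
      using h by blast
  next
    case False
    then show ?thesis
      apply (simp only: board.simps Let_def if_False)
      using Suc[of "insert (n - r) S"] by auto
  qed
qed

lemma board_finite: "finite (set_pmf (board n k r S))"
  by (rule finite_subset[OF board_support]) simp

definition gf :: "nat pmf \<Rightarrow> real \<Rightarrow> real" where
  "gf p x = measure_pmf.expectation p (\<lambda>c. x ^ c)"

lemma gf_return0: "gf (return_pmf 0) x = 1"
  by (simp add: gf_def)

lemma gf_map_add: "gf (map_pmf (\<lambda>c. c + e) p) x = x ^ e * gf p x"
  by (simp add: gf_def power_add mult.commute)

lemma gf_bind_set: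
  assumes "A \<noteq> {}" "finite A" "\<And>y. y \<in> A \<Longrightarrow> finite (set_pmf (f y))"
  shows "gf (pmf_of_set A \<bind> f) x = (\<Sum>y\<in>A. gf (f y) x) / real (card A)"
proof -
  have "gf (pmf_of_set A \<bind> f) x = (\<Sum>a\<in>A. gf (f a) x /\<^sub>R real (card A))"
    unfolding gf_def by (rule pmf_expectation_bind_pmf_of_set[OF assms])
  then show ?thesis by (simp add: sum_distrib_left divide_inverse_commute)
qed

lemma gf_as_sum:
  assumes "set_pmf p \<subseteq> {..N}"
  shows "gf p x = (\<Sum>m\<le>N. pmf p m * x ^ m)"
proof -
  have "gf p x = (\<Sum>m\<in>{..N}. x ^ m * pmf p m)"
    unfolding gf_def by (rule integral_measure_pmf_real) (use assms in auto)
  then show ?thesis by (simp add: mult.commute)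
qed



lemma card_split3:
  fixes S :: "nat set"
  assumes "S \<subseteq> {1..n}" "i \<le> k" "k \<le> n"
  shows "card S = card (S \<inter> {1..i}) + card (S \<inter> {i<..k}) + card (S \<inter> {k<..n})"
proof -
  have fin: "finite S" using assms(1) by (rule finite_subset) simp
  have e: "S = (S \<inter> {1..i}) \<union> (S \<inter> {i<..k}) \<union> (S \<inter> {k<..n})"
    using assms by auto
  have "card S = card ((S \<inter> {1..i}) \<union> (S \<inter> {i<..k}) \<union> (S \<inter> {k<..n}))"
    using e by simp
  also have "\<dots> = card ((S \<inter> {1..i}) \<union> (S \<inter> {i<..k})) + card (S \<inter> {k<..n})"
    by (rule card_Un_disjoint) (use fin assms in auto)
  also have "card ((S \<inter> {1..i}) \<union> (S \<inter> {i<..k})) = card (S \<inter> {1..i}) + card (S \<inter> {i<..k})"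
    by (rule card_Un_disjoint) (use fin in auto)
  finally show ?thesis .
qed

lemma card_diff_int:
  assumes "finite A"
  shows "card (A - S) + card (S \<inter> A) = card A"
proof -
  have "card (A - S) = card A - card (A \<inter> S)"
    by (rule card_Diff_subset_Int) (use assms in auto)
  moreover have "card (A \<inter> S) \<le> card A" by (rule card_mono) (use assms in auto)
  ultimately show ?thesis by (simp add: Int_commute)
qed



definition termA :: "real \<Rightarrow> nat \<Rightarrow> nat \<Rightarrow> nat \<Rightarrow> nat set \<Rightarrow> nat \<Rightarrow> real" where
  "termA x n k j S y = x ^ (if y = j then 0 else 1) *
     Psi x (card ({j<..k} - insert y S)) ((k - j) - card ({j<..k} - insert y S))
       (card (insert y S \<inter> {k<..n})) (\<lambda>l. Pf n k (insert y S) l x)"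

lemma caseA_sum:
  assumes Sn: "S \<subseteq> {1..n}" and cS: "card S = i" and ij: "j = Suc i" and jk: "j \<le> k" and kn: "k \<le> n"
  shows "(\<Sum>y\<in>{1..n} - S. termA x n k j S y) =
    Psi x (card ({i<..k} - S)) ((k - i) - card ({i<..k} - S)) (card (S \<inter> {k<..n})) (\<lambda>l. Pf n k S l x)"
proof -
  define f0 where "f0 = card ({j<..k} - S)"
  define a where "a = card (S \<inter> {k<..n})"
  define d0 where "d0 = (k - j) - f0"
  define Q where "Q = (\<lambda>l. Pf n k S l x)"
  define L where "L = {1..i} - S"
  define U where "U = {j<..k} - S"
  define H where "H = {k<..n} - S"
  define J where "J = {j} - S"
  have f0le: "f0 \<le> k - j" unfolding f0_def
    using card_mono[of "{j<..k}" "{j<..k} - S"] by auto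
  have fin: "finite L" "finite U" "finite H" "finite J" unfolding L_def U_def H_def J_def by auto
  have Fe: "{1..n} - S = L \<union> ((J \<union> U) \<union> H)"
    unfolding L_def U_def H_def J_def using ij jk kn by auto
  have sum_split: "(\<Sum>y\<in>{1..n} - S. termA x n k j S y) =
     (\<Sum>y\<in>L. termA x n k j S y) + ((\<Sum>y\<in>J. termA x n k j S y) + (\<Sum>y\<in>U. termA x n k j S y)) + (\<Sum>y\<in>H. termA x n k j S y)"
  proof -
    have d1: "L \<inter> ((J \<union> U) \<union> H) = {}" unfolding L_def U_def H_def J_def using ij jk by auto
    have d2: "(J \<union> U) \<inter> H = {}" unfolding U_def H_def J_def using ij jk by auto
    have d3: "J \<inter> U = {}" unfolding U_def J_def by auto
    show ?thesis unfolding Fe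
      by (simp add: sum.union_disjoint fin d1 d2 d3)
  qed
  have tL: "termA x n k j S y = x * Psi x f0 d0 a Q" if "y \<in> L" for y
  proof -
    have y: "y \<le> i" "y \<notin> S" using that by (auto simp: L_def)
    have ff: "card ({j<..k} - insert y S) = f0" unfolding f0_def using y ij by (intro arg_cong[where f=card]) auto
    have aa: "card (insert y S \<inter> {k<..n}) = a" unfolding a_def using y ij jk by (intro arg_cong[where f=card]) auto
    have qq: "(\<lambda>l. Pf n k (insert y S) l x) = Q"
      unfolding Q_def using y ij jk by (intro ext Pf_insert_low) auto
    have yj: "y \<noteq> j" using y ij by simp
    show ?thesis unfolding termA_def ff aa qq d0_def[symmetric] using yj by simp
  qed
  have tU: "termA x n k j S y = x * Psi x (f0 - 1) (Suc d0) a Q" if "y \<in> U" for y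
  proof -
    have y: "j < y" "y \<le> k" "y \<notin> S" using that by (auto simp: U_def)
    have c0: "{j<..k} - insert y S = ({j<..k} - S) - {y}" by auto
    have c1: "y \<in> {j<..k} - S" using y by auto
    have c: "card ({j<..k} - insert y S) = f0 - 1"
      unfolding f0_def c0 by (rule card_Diff_singleton) (rule c1)
    have "0 < f0" unfolding f0_def using y by (subst card_gt_0_iff) auto
    then have dd: "(k - j) - (f0 - 1) = Suc d0" using f0le unfolding d0_def by linarith
    have aa: "card (insert y S \<inter> {k<..n}) = a" unfolding a_def using y by (intro arg_cong[where f=card]) auto
    have qq: "(\<lambda>l. Pf n k (insert y S) l x) = Q"
      unfolding Q_def using y by (intro ext Pf_insert_low) auto
    have yj: "y \<noteq> j" using y by simp
    show ?thesis unfolding termA_def c dd aa qq using yj by simp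
  qed
  have tJ: "termA x n k j S y = Psi x f0 d0 a Q" if "y \<in> J" for y
  proof -
    have y: "y = j" "j \<notin> S" using that by (auto simp: J_def)
    have ff: "card ({j<..k} - insert y S) = f0" unfolding f0_def using y by (intro arg_cong[where f=card]) auto
    have aa: "card (insert y S \<inter> {k<..n}) = a" unfolding a_def using y jk by (intro arg_cong[where f=card]) auto
    have qq: "(\<lambda>l. Pf n k (insert y S) l x) = Q"
      unfolding Q_def using y jk by (intro ext Pf_insert_low) auto
    show ?thesis unfolding termA_def ff aa qq d0_def[symmetric] using y by simp
  qed
  have tH: "termA x n k j S y = x * Psi x f0 d0 (Suc a) (\<lambda>l. Pf n k (insert y S) l x)" if "y \<in> H" for y
  proof -
    have y: "k < y" "y \<le> n" "y \<notin> S" using that by (auto simp: H_def)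
    have ff: "card ({j<..k} - insert y S) = f0" unfolding f0_def using y by (intro arg_cong[where f=card]) auto
    have e: "insert y S \<inter> {k<..n} = insert y (S \<inter> {k<..n})" using y by auto
    have aa: "card (insert y S \<inter> {k<..n}) = Suc a" unfolding a_def e using y by simp
    have yj: "y \<noteq> j" using y jk by simp
    show ?thesis unfolding termA_def ff aa d0_def[symmetric] using yj by simp
  qed
  have sH: "(\<Sum>y\<in>H. termA x n k j S y) = x * Psi x f0 d0 (Suc a) (DQ Q)"
  proof -
    have "(\<Sum>y\<in>H. termA x n k j S y) = (\<Sum>y\<in>H. x * Psi x f0 d0 (Suc a) (\<lambda>l. Pf n k (insert y S) l x))"
      using tH by (intro sum.cong) auto
    also have "\<dots> = x * Psi x f0 d0 (Suc a) (\<lambda>l. \<Sum>y\<in>H. Pf n k (insert y S) l x)"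
      by (simp add: Psi_sum fin sum_distrib_left)
    also have "(\<lambda>l. \<Sum>y\<in>H. Pf n k (insert y S) l x) = DQ Q"
    proof
      fix l
      have "H = {k<..<Suc n} - S" unfolding H_def by auto
      then show "(\<Sum>y\<in>H. Pf n k (insert y S) l x) = DQ Q l"
        using Pf_telescope[where b=k and n=n and S=S and l=l and x=x] by (simp add: DQ_def Q_def)
    qed
    finally show ?thesis .
  qed
  have cL: "card L = (k - i - card ({i<..k} - S)) + a"
  proof -
    have "card S = card (S \<inter> {1..i}) + card (S \<inter> {i<..k}) + card (S \<inter> {k<..n})"
      by (rule card_split3) (use Sn ij jk kn in auto)
    moreover have "card ({1..i} - S) + card (S \<inter> {1..i}) = i" using card_diff_int[of "{1..i}" S] by simp
    moreover have "card ({i<..k} - S) + card (S \<inter> {i<..k}) = k - i" using card_diff_int[of "{i<..k}" S] by simp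
    ultimately show ?thesis unfolding L_def a_def using cS by linarith
  qed
  have cU: "card U = f0" unfolding U_def f0_def ..
  have sL: "(\<Sum>y\<in>L. termA x n k j S y) = real (card L) * (x * Psi x f0 d0 a Q)"
  proof -
    have "(\<Sum>y\<in>L. termA x n k j S y) = (\<Sum>y\<in>L. x * Psi x f0 d0 a Q)"
      by (rule sum.cong) (auto simp: tL)
    then show ?thesis by simp
  qed
  have sU: "(\<Sum>y\<in>U. termA x n k j S y) = real f0 * (x * Psi x (f0 - 1) (Suc d0) a Q)"
  proof -
    have "(\<Sum>y\<in>U. termA x n k j S y) = (\<Sum>y\<in>U. x * Psi x (f0 - 1) (Suc d0) a Q)"
      by (rule sum.cong) (auto simp: tU)
    then show ?thesis using cU by simp
  qed
  show ?thesis
  proof (cases "j \<in> S")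
    case True
    have J0: "J = {}" unfolding J_def using True by auto
    have ie: "card ({i<..k} - S) = f0" unfolding f0_def using True ij by (intro arg_cong[where f=card]) (auto; metis Suc_lessI)
    have dd: "(k - i) - f0 = Suc d0" unfolding d0_def using f0le ij jk by linarith
    have cL': "real (card L) = real (Suc d0 + a)" using cL ie dd by simp
    have "(\<Sum>y\<in>{1..n} - S. termA x n k j S y) =
      real (card L) * (x * Psi x f0 d0 a Q) + real f0 * (x * Psi x (f0 - 1) (Suc d0) a Q) + x * Psi x f0 d0 (Suc a) (DQ Q)"
      unfolding sum_split J0 sH sL sU by simp
    also have "\<dots> = Psi x f0 (Suc d0) a Q"
      unfolding Psi_T[of x f0 d0 a Q] cL' by (simp only: mult_ac)
    finally show ?thesis unfolding ie dd a_def Q_def .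
  next
    case False
    have J1: "J = {j}" unfolding J_def using False by auto
    have ie0: "{i<..k} - S = insert j ({j<..k} - S)" using False ij jk by auto
    have cf: "card ({i<..k} - S) = Suc f0" unfolding ie0 f0_def by simp
    have dd: "(k - i) - Suc f0 = d0" unfolding d0_def using f0le ij jk by linarith
    have cL': "real (card L) = real (d0 + a)" using cL cf dd by simp
    have sJ: "(\<Sum>y\<in>J. termA x n k j S y) = Psi x f0 d0 a Q" unfolding J1 using tJ J1 by simp
    have "(\<Sum>y\<in>{1..n} - S. termA x n k j S y) =
      real (card L) * (x * Psi x f0 d0 a Q) + (Psi x f0 d0 a Q + real f0 * (x * Psi x (f0 - 1) (Suc d0) a Q)) + x * Psi x f0 d0 (Suc a) (DQ Q)"
      unfolding sum_split sJ sH sL sU by simp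
    also have "\<dots> = Psi x (Suc f0) d0 a Q"
      unfolding Psi_F[of x f0 d0 a Q] cL' by (simp add: algebra_simps)
    finally show ?thesis unfolding cf dd a_def Q_def .
  qed
qed



lemma caseB_sum:
  assumes Sn: "S \<subseteq> {1..n}" and cS: "card S = i" and ij: "j = Suc i" and jS: "j \<in> S" and jn: "j \<le> n"
  shows "(\<Sum>y\<in>{1..n} - S. x * (fact (card (insert y S \<inter> {j<..n})) * Pf n j (insert y S) 0 x))
       = fact (card (S \<inter> {i<..n})) * Pf n i S 0 x"
proof -
  define a1 where "a1 = card (S \<inter> {j<..n})"
  define L where "L = {1..i} - S"
  define H where "H = {j<..n} - S"
  have e1: "S \<inter> {i<..n} = insert j (S \<inter> {j<..n})" using jS ij jn by auto
  have a: "card (S \<inter> {i<..n}) = Suc a1" unfolding e1 a1_def by simp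
  have Fe: "{1..n} - S = L \<union> H" unfolding L_def H_def
  proof (rule set_eqI)
    fix y show "y \<in> {1..n} - S \<longleftrightarrow> y \<in> {1..i} - S \<union> ({j<..n} - S)"
      using jS ij jn by (cases "y = j") auto
  qed
  have fin: "finite L" "finite H" unfolding L_def H_def by auto
  have dj: "L \<inter> H = {}" unfolding L_def H_def using ij by auto
  have cL: "card L = Suc a1"
  proof -
    have "card S = card (S \<inter> {1..i}) + card (S \<inter> {i<..i}) + card (S \<inter> {i<..n})"
      by (rule card_split3) (use Sn ij jn in auto)
    moreover have "card ({1..i} - S) + card (S \<inter> {1..i}) = i" using card_diff_int[of "{1..i}" S] by simp
    ultimately show ?thesis unfolding L_def using cS a by simp
  qed
  have sL: "(\<Sum>y\<in>L. x * (fact (card (insert y S \<inter> {j<..n})) * Pf n j (insert y S) 0 x))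
     = real (Suc a1) * (x * (fact a1 * Pf n j S 0 x))"
  proof -
    have "(\<Sum>y\<in>L. x * (fact (card (insert y S \<inter> {j<..n})) * Pf n j (insert y S) 0 x))
        = (\<Sum>y\<in>L. x * (fact a1 * Pf n j S 0 x))"
    proof (rule sum.cong)
      fix y assume "y \<in> L"
      then have y: "y \<le> i" "y \<notin> S" by (auto simp: L_def)
      have "card (insert y S \<inter> {j<..n}) = a1" unfolding a1_def using y ij by (intro arg_cong[where f=card]) auto
      moreover have "Pf n j (insert y S) 0 x = Pf n j S 0 x" using y ij by (intro Pf_insert_low) auto
      ultimately show "x * (fact (card (insert y S \<inter> {j<..n})) * Pf n j (insert y S) 0 x) = x * (fact a1 * Pf n j S 0 x)"
        by simp
    qed simp
    then show ?thesis using cL by simp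
  qed
  have sH: "(\<Sum>y\<in>H. x * (fact (card (insert y S \<inter> {j<..n})) * Pf n j (insert y S) 0 x))
     = x * (fact (Suc a1) * (Pf n j S 1 x - Pf n j S 0 x))"
  proof -
    have "(\<Sum>y\<in>H. x * (fact (card (insert y S \<inter> {j<..n})) * Pf n j (insert y S) 0 x))
        = (\<Sum>y\<in>H. x * (fact (Suc a1) * Pf n j (insert y S) 0 x))"
    proof (rule sum.cong)
      fix y assume "y \<in> H"
      then have y: "j < y" "y \<le> n" "y \<notin> S" by (auto simp: H_def)
      have e: "insert y S \<inter> {j<..n} = insert y (S \<inter> {j<..n})" using y by auto
      have "card (insert y S \<inter> {j<..n}) = Suc a1" unfolding a1_def e using y by simp
      then show "x * (fact (card (insert y S \<inter> {j<..n})) * Pf n j (insert y S) 0 x) = x * (fact (Suc a1) * Pf n j (insert y S) 0 x)"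
        by simp
    qed simp
    also have "\<dots> = x * (fact (Suc a1) * (\<Sum>y\<in>H. Pf n j (insert y S) 0 x))"
      by (simp add: sum_distrib_left)
    also have "(\<Sum>y\<in>H. Pf n j (insert y S) 0 x) = Pf n j S 1 x - Pf n j S 0 x"
    proof -
      have "H = {j<..<Suc n} - S" unfolding H_def by auto
      then show ?thesis using Pf_telescope[where b=j and n=n and S=S and l=0 and x=x] by simp
    qed
    finally show ?thesis .
  qed
  have sh: "Pf n i S 0 x = x * Pf n j S 1 x"
    using Pf_shift[of i n S 0 x] jS ij jn by simp
  have "(\<Sum>y\<in>{1..n} - S. x * (fact (card (insert y S \<inter> {j<..n})) * Pf n j (insert y S) 0 x))
     = real (Suc a1) * (x * (fact a1 * Pf n j S 0 x)) + x * (fact (Suc a1) * (Pf n j S 1 x - Pf n j S 0 x))"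
    unfolding Fe by (simp add: sum.union_disjoint fin dj sL sH)
  also have "\<dots> = fact (Suc a1) * (x * Pf n j S 1 x)"
    by (simp add: algebra_simps)
  finally show ?thesis unfolding a sh .
qed



lemma main_inv:
  assumes "k \<le> n" "r \<le> n" "S \<subseteq> {1..n}" "card S = n - r"
  shows "gf (board n k r S) x =
    Psi x (card ({n - r<..k} - S)) ((k - (n - r)) - card ({n - r<..k} - S))
      (card (S \<inter> {max (n - r) k<..n})) (\<lambda>l. Pf n (max (n - r) k) S l x) / fact r"
  using assms
proof (induction r arbitrary: S)
  case 0
  have e1: "{n<..k} - S = {}" using 0 by auto
  have e2: "max n k = n" using 0 by simp
  have e3: "S \<inter> {n<..n} = {}" by auto
  have e5: "{n<..<Suc n} = ({} :: nat set)" by auto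
  have e4: "Pf n n S 0 x = 1" unfolding Pf_def e5 by simp
  have "k - n = 0" using 0 by simp
  then show ?case by (simp add: e1 e2 e3 e4 gf_return0)
next
  case (Suc r S)
  define i where "i = n - Suc r"
  define j where "j = n - r"
  have ij: "j = Suc i" and ilt: "i < n" and jn: "j \<le> n" using Suc.prems unfolding i_def j_def by auto
  have Sn: "S \<subseteq> {1..n}" and cS: "card S = i" using Suc.prems unfolding i_def by auto
  define F where "F = {1..n} - S"
  have finF: "finite F" unfolding F_def by simp
  have cF: "card F = Suc r"
    unfolding F_def using Sn cS Suc.prems(2) unfolding i_def
    by (subst card_Diff_subset) (auto intro: finite_subset)
  have Fne: "F \<noteq> {}" using cF by auto
  have IH: "gf (board n k r (insert y S)) x =
    Psi x (card ({j<..k} - insert y S)) ((k - j) - card ({j<..k} - insert y S))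
      (card (insert y S \<inter> {max j k<..n})) (\<lambda>l. Pf n (max j k) (insert y S) l x) / fact r"
    if "y \<in> F" for y
  proof -
    have y: "y \<in> {1..n}" "y \<notin> S" using that unfolding F_def by auto
    have fS: "finite S" using Sn by (rule finite_subset) simp
    have "card (insert y S) = n - r" using y fS cS ij unfolding j_def by simp
    moreover have "insert y S \<subseteq> {1..n}" using y Sn by auto
    ultimately show ?thesis using Suc.IH[of "insert y S"] Suc.prems unfolding j_def by simp
  qed
  have fin_sup: "finite (set_pmf (map_pmf (\<lambda>c. c + (if y = j then 0 else 1)) (board n k r (insert y S))))" for y
    using board_finite by simp
  have bind_gf: "gf (pmf_of_set F \<bind> (\<lambda>y. map_pmf (\<lambda>c. c + (if y = j then 0 else 1)) (board n k r (insert y S)))) x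
     = (\<Sum>y\<in>F. x ^ (if y = j then 0 else 1) * gf (board n k r (insert y S)) x) / real (Suc r)"
    by (subst gf_bind_set[OF Fne finF fin_sup]) (simp add: gf_map_add cF)
  have nri: "n - Suc r = i" unfolding i_def ..
  have nrj: "n - r = j" unfolding j_def ..
  have factS: "(fact (Suc r) :: real) = real (Suc r) * fact r" by simp
  show ?case
  proof (cases "j \<le> k")
    case True
    have mk: "max j k = k" "max i k = k" using True ij by auto
    have b: "board n k (Suc r) S = pmf_of_set F \<bind> (\<lambda>y. map_pmf (\<lambda>c. c + (if y = j then 0 else 1)) (board n k r (insert y S)))"
      using True unfolding F_def by (simp add: Let_def nrj)
    have "(\<Sum>y\<in>F. x ^ (if y = j then 0 else 1) * gf (board n k r (insert y S)) x) = (\<Sum>y\<in>F. termA x n k j S y) / fact r"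
      unfolding sum_divide_distrib
      by (rule sum.cong) (simp_all add: IH mk termA_def)
    also have "\<dots> = Psi x (card ({i<..k} - S)) ((k - i) - card ({i<..k} - S)) (card (S \<inter> {k<..n})) (\<lambda>l. Pf n k S l x) / fact r"
      unfolding F_def using caseA_sum[OF Sn cS ij True Suc.prems(1)] by simp
    finally show ?thesis unfolding b bind_gf nri mk factS by simp
  next
    case False
    have mk: "max j k = j" "max i k = i" using False ij by auto
    have e0: "{i<..k} = {}" "{j<..k} = {}" using False ij by auto
    have ki: "k - i = 0" "k - j = 0" using False ij by auto
    show ?thesis
    proof (cases "j \<in> S")
      case True
      have b: "board n k (Suc r) S = pmf_of_set F \<bind> (\<lambda>y. map_pmf (\<lambda>c. c + (if y = j then 0 else 1)) (board n k r (insert y S)))"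
        using True unfolding F_def by (simp add: Let_def nrj)
      have "(\<Sum>y\<in>F. x ^ (if y = j then 0 else 1) * gf (board n k r (insert y S)) x)
          = (\<Sum>y\<in>F. x * (fact (card (insert y S \<inter> {j<..n})) * Pf n j (insert y S) 0 x)) / fact r"
        unfolding sum_divide_distrib
      proof (rule sum.cong)
        fix y assume y: "y \<in> F"
        then have "y \<noteq> j" using True unfolding F_def by auto
        then show "x ^ (if y = j then 0 else 1) * gf (board n k r (insert y S)) x =
          x * (fact (card (insert y S \<inter> {j<..n})) * Pf n j (insert y S) 0 x) / fact r"
          using IH[OF y] by (simp add: mk e0 ki)
      qed simp
      also have "\<dots> = fact (card (S \<inter> {i<..n})) * Pf n i S 0 x / fact r"
        unfolding F_def using caseB_sum[OF Sn cS ij True jn] by simp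
      finally show ?thesis unfolding b bind_gf nri mk factS by (simp add: e0 ki)
    next
      case jS: False
      have b: "board n k (Suc r) S = board n k r (insert j S)"
        using jS False by (simp add: Let_def nrj)
      have jF: "j \<in> F" unfolding F_def using jS ij jn by auto
      have a: "card (insert j S \<inter> {j<..n}) = card (S \<inter> {i<..n})"
        using jS ij by (intro arg_cong[where f=card]) (auto; metis Suc_lessI)
      have p1: "Pf n j (insert j S) 0 x = Pf n j S 0 x" by (rule Pf_insert_low) simp
      have p2: "Pf n i S 0 x = real (Suc r) * Pf n j S 0 x"
      proof -
        have nn: "n - i = Suc r" unfolding i_def using Suc.prems(2) by simp
        have "Suc i \<notin> S" using jS ij by simp
        then show ?thesis using Pf_shift[of i n S 0 x] ilt nn ij by simp
      qed
      show ?thesis unfolding b IH[OF jF] nri mk a factS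
        by (simp add: e0 ki p1 p2)
    qed
  qed
qed



lemma stirl_prod:
  "(\<Sum>j\<le>N. real (stirling (Suc N) (Suc j)) * y ^ j) = (\<Prod>w\<in>{1..N}. real w + y)"
proof (induction N)
  case 0 then show ?case by simp
next
  case (Suc N)
  have "(\<Sum>j\<le>Suc N. real (stirling (Suc (Suc N)) (Suc j)) * y ^ j)
      = real (Suc N) * (\<Sum>j\<le>Suc N. real (stirling (Suc N) (Suc j)) * y ^ j)
        + (\<Sum>j\<le>Suc N. real (stirling (Suc N) j) * y ^ j)"
    by (simp add: sum.distrib sum_distrib_left algebra_simps)
  also have "(\<Sum>j\<le>Suc N. real (stirling (Suc N) (Suc j)) * y ^ j) = (\<Sum>j\<le>N. real (stirling (Suc N) (Suc j)) * y ^ j)"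
    by (simp add: sum.atMost_Suc)
  also have "(\<Sum>j\<le>Suc N. real (stirling (Suc N) j) * y ^ j) = y * (\<Sum>j\<le>N. real (stirling (Suc N) (Suc j)) * y ^ j)"
    by (subst sum.atMost_Suc_shift) (simp add: sum_distrib_left algebra_simps)
  finally have "(\<Sum>j\<le>Suc N. real (stirling (Suc (Suc N)) (Suc j)) * y ^ j)
       = (real (Suc N) + y) * (\<Sum>j\<le>N. real (stirling (Suc N) (Suc j)) * y ^ j)"
    by (simp add: algebra_simps)
  also have "\<dots> = (\<Prod>w\<in>{1..Suc N}. real w + y)"
    using Suc by (simp add: mult.commute)
  finally show ?case .
qed

lemma Pf_empty:
  assumes "k \<le> n"
  shows "Pf n k {} l x = (\<Prod>w\<in>{1..n - k}. real w + real l * x)"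
  unfolding Pf_def
proof (rule prod.reindex_bij_witness[where i = "\<lambda>w. n + 1 - w" and j = "\<lambda>c. n + 1 - c"])
  fix c assume c: "c \<in> {k<..<Suc n}"
  then show "n + 1 - (n + 1 - c) = c" "n + 1 - c \<in> {1..n - k}" by auto
  have "real (n + 1 - c) = real (n - c + 1)" using c by simp
  then show "real (n + 1 - c) + real l * x = (if c \<in> {} then x else real (n - c + 1) + real (card ({} \<inter> {k<..<c}) + l) * x)"
    by simp
next
  fix w assume w: "w \<in> {1..n - k}"
  then show "n + 1 - (n + 1 - w) = w" "n + 1 - w \<in> {k<..<Suc n}" using assms by auto
qed



lemma binom_aux:
  assumes "t + j \<le> k"
  shows "real (k choose (t + j)) * fact (t + j) / fact j = real (k choose t) * fact t * real ((k - t) choose j)"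
proof -
  have a: "real (k choose (t + j)) = fact k / (fact (t + j) * fact (k - (t + j)))" using assms by (rule binomial_fact)
  have b: "real (k choose t) = fact k / (fact t * fact (k - t))" using assms by (intro binomial_fact) simp
  have c: "real ((k - t) choose j) = fact (k - t) / (fact j * fact (k - t - j))" using assms by (intro binomial_fact) simp
  have d: "k - (t + j) = k - t - j" by simp
  show ?thesis unfolding a b c d by (simp add: field_simps)
qed

lemma per_t:
  assumes "t \<le> k"
  shows "real (k choose t) * fact t * x ^ t * (1 - x) ^ (k - t) =
    (\<Sum>s=t..k. real (k choose s) * fact s * (-1) ^ (s - t) / fact (s - t) * x ^ s)"
proof -
  have "(1 - x) ^ (k - t) = (\<Sum>j\<le>k - t. real ((k - t) choose j) * (-x) ^ j)"
    using binomial_ring[of "-x" 1 "k - t"] by simp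
  then have "real (k choose t) * fact t * x ^ t * (1 - x) ^ (k - t)
     = (\<Sum>j\<le>k - t. real (k choose t) * fact t * x ^ t * (real ((k - t) choose j) * (-x) ^ j))"
    by (simp add: sum_distrib_left)
  also have "\<dots> = (\<Sum>j\<le>k - t. real (k choose (t + j)) * fact (t + j) * (-1) ^ j / fact j * x ^ (t + j))"
  proof (rule sum.cong)
    fix j assume "j \<in> {..k - t}"
    then have "t + j \<le> k" using assms by auto
    note b = binom_aux[OF this]
    have "real (k choose (t + j)) * fact (t + j) * (-1) ^ j / fact j * x ^ (t + j)
       = (real (k choose (t + j)) * fact (t + j) / fact j) * ((-1) ^ j * x ^ (t + j))" by simp
    also have "\<dots> = (real (k choose t) * fact t * real ((k - t) choose j)) * ((-1) ^ j * (x ^ t * x ^ j))"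
      unfolding b power_add ..
    also have "\<dots> = real (k choose t) * fact t * x ^ t * (real ((k - t) choose j) * (-x) ^ j)"
      unfolding power_minus[of x j] by (simp only: mult_ac)
    finally show "real (k choose t) * fact t * x ^ t * (real ((k - t) choose j) * (-x) ^ j) =
      real (k choose (t + j)) * fact (t + j) * (-1) ^ j / fact j * x ^ (t + j)" by simp
  qed simp
  also have "\<dots> = (\<Sum>s=t..k. real (k choose s) * fact s * (-1) ^ (s - t) / fact (s - t) * x ^ s)"
  proof -
    have "{t..k} = (\<lambda>j. t + j) ` {..k - t}"
    proof (rule set_eqI)
      fix s show "s \<in> {t..k} \<longleftrightarrow> s \<in> (\<lambda>j. t + j) ` {..k - t}"
      proof
        assume "s \<in> {t..k}" then show "s \<in> (\<lambda>j. t + j) ` {..k - t}"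
          by (intro image_eqI[where x="s - t"]) auto
      qed (use assms in auto)
    qed
    moreover have "inj_on (\<lambda>j. t + j) {..k - t}" by (auto simp: inj_on_def)
    ultimately show ?thesis by (simp add: sum.reindex)
  qed
  finally show ?thesis .
qed

lemma combine:
  fixes P :: "nat \<Rightarrow> real"
  shows "(\<Sum>t\<le>k. real (k choose t) * fact t * x ^ t * (1 - x) ^ (k - t) * P t)
    = P 0 * (1 - x) ^ k + (\<Sum>s=1..k. real (k choose s) * fact s *
        (\<Sum>l=1..s. (-1) ^ (s - l) / fact (s - l) * x ^ s * P l))"
proof -
  have e: "{..k} = insert 0 {1..k}" by auto
  have "(\<Sum>t=1..k. real (k choose t) * fact t * x ^ t * (1 - x) ^ (k - t) * P t)
      = (\<Sum>t=1..k. \<Sum>s=1..k. if t \<le> s then real (k choose s) * fact s * (-1) ^ (s - t) / fact (s - t) * x ^ s * P t else 0)"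
  proof (rule sum.cong)
    fix t assume t: "t \<in> {1..k}"
    have f: "{s \<in> {1..k}. t \<le> s} = {t..k}" using t by auto
    have "real (k choose t) * fact t * x ^ t * (1 - x) ^ (k - t) * P t
       = (\<Sum>s=t..k. real (k choose s) * fact s * (-1) ^ (s - t) / fact (s - t) * x ^ s * P t)"
      using per_t[of t k x] t by (simp add: sum_distrib_right)
    also have "\<dots> = (\<Sum>s\<in>{s \<in> {1..k}. t \<le> s}. real (k choose s) * fact s * (-1) ^ (s - t) / fact (s - t) * x ^ s * P t)"
      unfolding f ..
    also have "\<dots> = (\<Sum>s=1..k. if t \<le> s then real (k choose s) * fact s * (-1) ^ (s - t) / fact (s - t) * x ^ s * P t else 0)"
      by (rule sum.inter_filter) simp
    finally show "real (k choose t) * fact t * x ^ t * (1 - x) ^ (k - t) * P t = \<dots>" .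
  qed simp
  also have "\<dots> = (\<Sum>s=1..k. \<Sum>t=1..k. if t \<le> s then real (k choose s) * fact s * (-1) ^ (s - t) / fact (s - t) * x ^ s * P t else 0)"
    by (rule sum.swap)
  also have "\<dots> = (\<Sum>s=1..k. real (k choose s) * fact s * (\<Sum>l=1..s. (-1) ^ (s - l) / fact (s - l) * x ^ s * P l))"
  proof (rule sum.cong)
    fix s assume s: "s \<in> {1..k}"
    have f: "{t \<in> {1..k}. t \<le> s} = {1..s}" using s by auto
    have "(\<Sum>t=1..k. if t \<le> s then real (k choose s) * fact s * (-1) ^ (s - t) / fact (s - t) * x ^ s * P t else 0)
       = (\<Sum>t\<in>{t \<in> {1..k}. t \<le> s}. real (k choose s) * fact s * (-1) ^ (s - t) / fact (s - t) * x ^ s * P t)"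
      by (rule sum.inter_filter[symmetric]) simp
    also have "\<dots> = (\<Sum>t=1..s. real (k choose s) * fact s * (-1) ^ (s - t) / fact (s - t) * x ^ s * P t)"
      unfolding f ..
    also have "\<dots> = real (k choose s) * fact s * (\<Sum>l=1..s. (-1) ^ (s - l) / fact (s - l) * x ^ s * P l)"
      by (simp add: sum_distrib_left mult_ac)
    finally show "(\<Sum>t=1..k. if t \<le> s then real (k choose s) * fact s * (-1) ^ (s - t) / fact (s - t) * x ^ s * P t else 0) = \<dots>" .
  qed simp
  finally have r: "(\<Sum>t=1..k. real (k choose t) * fact t * x ^ t * (1 - x) ^ (k - t) * P t) = \<dots>" .
  have "(\<Sum>t\<le>k. real (k choose t) * fact t * x ^ t * (1 - x) ^ (k - t) * P t)
     = real (k choose 0) * fact 0 * x ^ 0 * (1 - x) ^ (k - 0) * P 0 + (\<Sum>t=1..k. real (k choose t) * fact t * x ^ t * (1 - x) ^ (k - t) * P t)"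
    unfolding e by (subst sum.insert) auto
  then show ?thesis unfolding r by simp
qed



lemma sum_shift_ivl:
  fixes t k :: nat
  assumes "t \<le> k"
  shows "(\<Sum>s=t..k. f s) = (\<Sum>j\<le>k - t. f (t + j))"
proof -
  have "{t..k} = (\<lambda>j. t + j) ` {..k - t}"
  proof (rule set_eqI)
    fix s show "s \<in> {t..k} \<longleftrightarrow> s \<in> (\<lambda>j. t + j) ` {..k - t}"
    proof
      assume "s \<in> {t..k}" then show "s \<in> (\<lambda>j. t + j) ` {..k - t}"
        by (intro image_eqI[where x="s - t"]) auto
    qed (use assms in auto)
  qed
  moreover have "inj_on (\<lambda>j. t + j) {..k - t}" by (auto simp: inj_on_def)
  ultimately show ?thesis by (simp add: sum.reindex)
qed

lemma stirl_zero_below: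
  assumes "m < s"
  shows "stirl (Suc N) (int m - int s + 1) = 0"
proof (cases "int m - int s + 1 < 0")
  case True then show ?thesis by (simp add: stirl_def)
next
  case False
  then have "int m - int s + 1 = 0" using assms by linarith
  then show ?thesis by (simp add: stirl_def)
qed

lemma inner_stirl:
  assumes s: "1 \<le> s" "s \<le> k" and kn: "k \<le> n"
  shows "(\<Sum>m\<le>n. real (stirl (n - k + 1) (int m - int s + 1)) * (real l powi (int m - int s)) * x ^ m)
     = x ^ s * (\<Prod>w\<in>{1..n - k}. real w + real l * x)"
proof -
  define N where "N = n - k"
  define g where "g m = real (stirl (Suc N) (int m - int s + 1)) * (real l powi (int m - int s)) * x ^ m" for m
  have "(\<Sum>m\<le>n. real (stirl (n - k + 1) (int m - int s + 1)) * (real l powi (int m - int s)) * x ^ m) = (\<Sum>m\<le>n. g m)"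
    unfolding g_def N_def by simp
  also have "\<dots> = (\<Sum>m=s..n. g m)"
  proof (rule sum.mono_neutral_right)
    show "finite {..n}" by simp
    show "{s..n} \<subseteq> {..n}" by auto
    show "\<forall>i\<in>{..n} - {s..n}. g i = 0"
    proof
      fix i assume "i \<in> {..n} - {s..n}"
      then have "i < s" by auto
      then show "g i = 0" unfolding g_def by (simp add: stirl_zero_below)
    qed
  qed
  also have "\<dots> = (\<Sum>j\<le>n - s. g (s + j))"
    using s kn by (intro sum_shift_ivl) simp
  also have "\<dots> = (\<Sum>j\<le>n - s. x ^ s * (real (stirling (Suc N) (Suc j)) * (real l * x) ^ j))"
  proof (rule sum.cong)
    fix j
    have a: "int (s + j) - int s + 1 = int (Suc j)" by simp
    have b: "int (s + j) - int s = int j" by simp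
    have nn: "\<not> int (Suc j) < 0" by linarith
    have c: "stirl (Suc N) (int (s + j) - int s + 1) = stirling (Suc N) (Suc j)"
      unfolding stirl_def a by (simp only: nat_int if_not_P[OF nn])
    have d: "real l powi (int (s + j) - int s) = real l ^ j"
      unfolding b by (rule power_int_of_nat)
    show "g (s + j) = x ^ s * (real (stirling (Suc N) (Suc j)) * (real l * x) ^ j)"
      unfolding g_def c d by (simp add: power_add power_mult_distrib mult_ac)
  qed simp
  also have "\<dots> = x ^ s * (\<Sum>j\<le>N. real (stirling (Suc N) (Suc j)) * (real l * x) ^ j)"
  proof -
    have "(\<Sum>j\<le>n - s. real (stirling (Suc N) (Suc j)) * (real l * x) ^ j) = (\<Sum>j\<le>N. real (stirling (Suc N) (Suc j)) * (real l * x) ^ j)"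
    proof (rule sum.mono_neutral_right)
      show "finite {..n - s}" by simp
      show "{..N} \<subseteq> {..n - s}" using s kn unfolding N_def by auto
      show "\<forall>i\<in>{..n - s} - {..N}. real (stirling (Suc N) (Suc i)) * (real l * x) ^ i = 0" by auto
    qed
    then show ?thesis by (simp only: sum_distrib_left[symmetric])
  qed
  also have "\<dots> = x ^ s * (\<Prod>w\<in>{1..n - k}. real w + real l * x)"
    unfolding stirl_prod N_def ..
  finally show ?thesis .
qed



definition Tm :: "nat \<Rightarrow> nat \<Rightarrow> nat \<Rightarrow> real" where
  "Tm n k m = (-1) ^ m * fact (n - k) / fact n * real (k choose m)
    + 1 / fact n * (\<Sum>s = 1..k. real (stirl (n - k + 1) (int m - int s + 1))
        * real (k choose s) * fact s
        * (\<Sum>l = 1..s. (-1) ^ (s - l) * (real l powi (int m - int s)) / fact (s - l)))"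

lemma per_s:
  assumes s: "1 \<le> s" "s \<le> k" and kn: "k \<le> n"
  shows "(\<Sum>m\<le>n. real (stirl (n - k + 1) (int m - int s + 1)) * real (k choose s) * fact s
        * (\<Sum>l = 1..s. (-1) ^ (s - l) * (real l powi (int m - int s)) / fact (s - l)) * x ^ m)
    = real (k choose s) * fact s * (\<Sum>l=1..s. (-1) ^ (s - l) / fact (s - l) * x ^ s * (\<Prod>w\<in>{1..n - k}. real w + real l * x))"
proof -
  have "(\<Sum>m\<le>n. real (stirl (n - k + 1) (int m - int s + 1)) * real (k choose s) * fact s
        * (\<Sum>l = 1..s. (-1) ^ (s - l) * (real l powi (int m - int s)) / fact (s - l)) * x ^ m)
     = (\<Sum>m\<le>n. \<Sum>l = 1..s. (real (k choose s) * fact s * ((-1) ^ (s - l) / fact (s - l))) *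
          (real (stirl (n - k + 1) (int m - int s + 1)) * (real l powi (int m - int s)) * x ^ m))"
    by (rule sum.cong) (simp_all add: sum_distrib_left sum_distrib_right mult_ac)
  also have "\<dots> = (\<Sum>l = 1..s. \<Sum>m\<le>n. (real (k choose s) * fact s * ((-1) ^ (s - l) / fact (s - l))) *
          (real (stirl (n - k + 1) (int m - int s + 1)) * (real l powi (int m - int s)) * x ^ m))"
    by (rule sum.swap)
  also have "\<dots> = (\<Sum>l = 1..s. (real (k choose s) * fact s * ((-1) ^ (s - l) / fact (s - l))) *
          (x ^ s * (\<Prod>w\<in>{1..n - k}. real w + real l * x)))"
  proof (rule sum.cong[OF refl])
    fix l assume "l \<in> {1..s}"
    have "(\<Sum>m\<le>n. (real (k choose s) * fact s * ((-1) ^ (s - l) / fact (s - l))) *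
          (real (stirl (n - k + 1) (int m - int s + 1)) * (real l powi (int m - int s)) * x ^ m))
       = (real (k choose s) * fact s * ((-1) ^ (s - l) / fact (s - l))) *
          (\<Sum>m\<le>n. real (stirl (n - k + 1) (int m - int s + 1)) * (real l powi (int m - int s)) * x ^ m)"
      by (rule sum_distrib_left[symmetric])
    also have "(\<Sum>m\<le>n. real (stirl (n - k + 1) (int m - int s + 1)) * (real l powi (int m - int s)) * x ^ m)
       = x ^ s * (\<Prod>w\<in>{1..n - k}. real w + real l * x)"
      by (rule inner_stirl[OF s kn])
    finally show "(\<Sum>m\<le>n. (real (k choose s) * fact s * ((-1) ^ (s - l) / fact (s - l))) *
          (real (stirl (n - k + 1) (int m - int s + 1)) * (real l powi (int m - int s)) * x ^ m))
       = (real (k choose s) * fact s * ((-1) ^ (s - l) / fact (s - l))) *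
          (x ^ s * (\<Prod>w\<in>{1..n - k}. real w + real l * x))" .
  qed
  also have "\<dots> = real (k choose s) * fact s * (\<Sum>l=1..s. (-1) ^ (s - l) / fact (s - l) * x ^ s * (\<Prod>w\<in>{1..n - k}. real w + real l * x))"
    by (simp add: sum_distrib_left mult_ac)
  finally show ?thesis .
qed

lemma Tm_gf:
  assumes kn: "k \<le> n"
  shows "(\<Sum>m\<le>n. Tm n k m * x ^ m) = (fact (n - k) * (1 - x) ^ k + (\<Sum>s=1..k. real (k choose s) * fact s *
        (\<Sum>l=1..s. (-1) ^ (s - l) / fact (s - l) * x ^ s * (\<Prod>w\<in>{1..n - k}. real w + real l * x)))) / fact n"
proof -
  have A: "(\<Sum>m\<le>n. real (k choose m) * (-x) ^ m) = (1 - x) ^ k"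
  proof -
    have "(\<Sum>m\<le>n. real (k choose m) * (-x) ^ m) = (\<Sum>m\<le>k. real (k choose m) * (-x) ^ m)"
    proof (rule sum.mono_neutral_right)
      show "finite {..n}" by simp
      show "{..k} \<subseteq> {..n}" using kn by auto
      show "\<forall>i\<in>{..n} - {..k}. real (k choose i) * (- x) ^ i = 0" by auto
    qed
    also have "\<dots> = (1 - x) ^ k" using binomial_ring[of "-x" 1 k] by simp
    finally show ?thesis .
  qed
  have B: "(\<Sum>m\<le>n. (\<Sum>s = 1..k. real (stirl (n - k + 1) (int m - int s + 1))
        * real (k choose s) * fact s
        * (\<Sum>l = 1..s. (-1) ^ (s - l) * (real l powi (int m - int s)) / fact (s - l))) * x ^ m)
     = (\<Sum>s=1..k. real (k choose s) * fact s *
        (\<Sum>l=1..s. (-1) ^ (s - l) / fact (s - l) * x ^ s * (\<Prod>w\<in>{1..n - k}. real w + real l * x)))"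
  proof -
    have "(\<Sum>m\<le>n. (\<Sum>s = 1..k. real (stirl (n - k + 1) (int m - int s + 1))
        * real (k choose s) * fact s
        * (\<Sum>l = 1..s. (-1) ^ (s - l) * (real l powi (int m - int s)) / fact (s - l))) * x ^ m)
      = (\<Sum>m\<le>n. \<Sum>s = 1..k. real (stirl (n - k + 1) (int m - int s + 1))
        * real (k choose s) * fact s
        * (\<Sum>l = 1..s. (-1) ^ (s - l) * (real l powi (int m - int s)) / fact (s - l)) * x ^ m)"
      by (simp add: sum_distrib_right)
    also have "\<dots> = (\<Sum>s = 1..k. \<Sum>m\<le>n. real (stirl (n - k + 1) (int m - int s + 1))
        * real (k choose s) * fact s
        * (\<Sum>l = 1..s. (-1) ^ (s - l) * (real l powi (int m - int s)) / fact (s - l)) * x ^ m)"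
      by (rule sum.swap)
    also have "\<dots> = (\<Sum>s=1..k. real (k choose s) * fact s *
        (\<Sum>l=1..s. (-1) ^ (s - l) / fact (s - l) * x ^ s * (\<Prod>w\<in>{1..n - k}. real w + real l * x)))"
    proof (rule sum.cong[OF refl])
      fix s assume "s \<in> {1..k}"
      then have "1 \<le> s" "s \<le> k" by auto
      then show "(\<Sum>m\<le>n. real (stirl (n - k + 1) (int m - int s + 1))
        * real (k choose s) * fact s
        * (\<Sum>l = 1..s. (-1) ^ (s - l) * (real l powi (int m - int s)) / fact (s - l)) * x ^ m) =
        real (k choose s) * fact s *
        (\<Sum>l=1..s. (-1) ^ (s - l) / fact (s - l) * x ^ s * (\<Prod>w\<in>{1..n - k}. real w + real l * x))"
        by (rule per_s[OF _ _ kn])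
    qed
    finally show ?thesis .
  qed
  have "(\<Sum>m\<le>n. Tm n k m * x ^ m) =
     fact (n - k) / fact n * (\<Sum>m\<le>n. real (k choose m) * (-x) ^ m)
     + 1 / fact n * (\<Sum>m\<le>n. (\<Sum>s = 1..k. real (stirl (n - k + 1) (int m - int s + 1))
        * real (k choose s) * fact s
        * (\<Sum>l = 1..s. (-1) ^ (s - l) * (real l powi (int m - int s)) / fact (s - l))) * x ^ m)"
    unfolding Tm_def
    by (simp add: sum.distrib sum_distrib_left sum_distrib_right power_minus[of x] algebra_simps)
  also have "\<dots> = fact (n - k) / fact n * (1 - x) ^ k + 1 / fact n * (\<Sum>s=1..k. real (k choose s) * fact s *
        (\<Sum>l=1..s. (-1) ^ (s - l) / fact (s - l) * x ^ s * (\<Prod>w\<in>{1..n - k}. real w + real l * x)))"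
    unfolding A B ..
  finally show ?thesis by (simp add: field_simps)
qed



lemma gf_start:
  assumes "0 < k" "k \<le> n"
  shows "(\<Sum>m\<le>n. pmf (board n k n {}) m * x ^ m) = (\<Sum>m\<le>n. Tm n k m * x ^ m)"
proof -
  define W where "W l = (\<Prod>w\<in>{1..n - k}. real w + real l * x)" for l :: nat
  have "(\<Sum>m\<le>n. pmf (board n k n {}) m * x ^ m) = gf (board n k n {}) x"
    by (rule gf_as_sum[symmetric]) (rule board_support)
  also have "\<dots> = Psi x k 0 0 (\<lambda>l. Pf n k {} l x) / fact n"
    using main_inv[of k n n "{}" x] assms by simp
  also have "Psi x k 0 0 (\<lambda>l. Pf n k {} l x) = (\<Sum>t\<le>k. real (k choose t) * fact t * x ^ t * (1 - x) ^ (k - t) * W t)"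
    unfolding Psi_closed W_def using assms by (simp add: Pf_empty)
  also have "\<dots> = W 0 * (1 - x) ^ k + (\<Sum>s=1..k. real (k choose s) * fact s *
        (\<Sum>l=1..s. (-1) ^ (s - l) / fact (s - l) * x ^ s * W l))"
    by (rule combine)
  also have "W 0 = fact (n - k)"
    unfolding W_def by (simp add: fact_prod)
  finally show ?thesis unfolding Tm_gf[OF assms(2)] W_def by simp
qed

theorem theorem1:
  fixes n k m :: nat
  assumes "0 < k" and "k \<le> n"
  shows "P n k m =
    (-1) ^ m * fact (n - k) / fact n * real (k choose m)
    + 1 / fact n * (\<Sum>s = 1..k. real (stirl (n - k + 1) (int m - int s + 1))
        * real (k choose s) * fact s
        * (\<Sum>l = 1..s. (-1) ^ (s - l) * (real l powi (int m - int s)) / fact (s - l)))"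
proof -
  have goal: "pmf (board n k n {}) m = Tm n k m"
  proof (cases "m \<le> n")
    case True
    define p :: "real poly" where "p = (\<Sum>i\<le>n. monom (pmf (board n k n {}) i - Tm n k i) i)"
    have "poly p x = 0" for x
    proof -
      have "poly p x = (\<Sum>i\<le>n. (pmf (board n k n {}) i - Tm n k i) * x ^ i)"
        unfolding p_def by (simp add: poly_sum poly_monom)
      also have "\<dots> = 0"
        using gf_start[OF assms, of x] by (simp add: sum_subtractf left_diff_distrib)
      finally show ?thesis .
    qed
    then have "p = 0" using poly_all_0_iff_0 by blast
    then have "coeff p m = 0" by simp
    moreover have "coeff p m = pmf (board n k n {}) m - Tm n k m"
      unfolding p_def by (rule coeff_sum_monom[OF True])
    ultimately show ?thesis by simp
  next
    case False
    then have "m \<notin> set_pmf (board n k n {})" using board_support[of n k n "{}"] by auto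
    then have z1: "pmf (board n k n {}) m = 0" by (simp add: set_pmf_eq)
    have c0: "k choose m = 0" using False assms by simp
    have "stirl (n - k + 1) (int m - int s + 1) = 0" if "s \<in> {1..k}" for s
    proof -
      have "int m - int s + 1 = int (m - s + 1)" using that False assms by auto
      moreover have "n - k + 1 < m - s + 1" using that False assms by auto
      ultimately show ?thesis unfolding stirl_def by simp
    qed
    then have "Tm n k m = 0" unfolding Tm_def by (simp add: c0)
    then show ?thesis using z1 by simp
  qed
  show ?thesis unfolding P_def goal Tm_def ..
qed


end
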